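(* Let $P$ be a treetope with base $B$ that is in general position. For a vertex $v$ of $P$, call a vertex $w$ a \emph{parent} of $v$ if $w$ is adjacent to $v$ in the graph of $P$ and $w$ is strictly farther than $v$ from the hyperplane spanned by $B$; call a vertex a \emph{root} of $P$ if it has no parent. Then every vertex of $P$ has at most one parent, and $P$ has exactly one root.
   Context: A polytope is the convex hull of a finite set of points in a Euclidean space; its faces, vertices (0-dimensional faces), edges (1-dimensional faces), facets (faces of dimension one less than the polytope) and its graph (1-skeleton: vertices and edges) are defined as usual, the empty set being a face of dimension $-1$. A \emph{treetope} is a polytope $P$ together with a distinguished facet $B$ (the \emph{base}) such that every face $F$ of $P$ whose intersection $F\cap B$ consists of at most one point has dimension at most one. A $d$-treetope is a treetope of dimension $d$. A treetope is in \emph{general position} if no two vertices of $P$ have equal nonzero distance from the hyperplane spanned by $B$. *)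

theory Defs
  imports "HOL-Analysis.Analysis"
begin

definition treetope :: "'a::euclidean_space set \<Rightarrow> 'a set \<Rightarrow> bool" where
  "treetope P B \<longleftrightarrow> polytope P \<and> B facet_of P \<and>
     (\<forall>F. F face_of P \<and> (F \<inter> B = {} \<or> (\<exists>x. F \<inter> B = {x})) \<longrightarrow> aff_dim F \<le> 1)"

definition vertex_of :: "'a::euclidean_space \<Rightarrow> 'a set \<Rightarrow> bool" where
  "vertex_of v P \<longleftrightarrow> {v} face_of P"

definition adjacent_in :: "'a::euclidean_space set \<Rightarrow> 'a \<Rightarrow> 'a \<Rightarrow> bool" where
  "adjacent_in P v w \<longleftrightarrow> vertex_of v P \<and> vertex_of w P \<and> v \<noteq> w \<and> closed_segment v w edge_of P"

definition height :: "'a::euclidean_space set \<Rightarrow> 'a \<Rightarrow> real" where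
  "height B x = infdist x (affine hull B)"

definition general_position_treetope :: "'a::euclidean_space set \<Rightarrow> 'a set \<Rightarrow> bool" where
  "general_position_treetope P B \<longleftrightarrow> treetope P B \<and>
     (\<forall>v w. vertex_of v P \<and> vertex_of w P \<and> v \<noteq> w \<and> height B v = height B w \<longrightarrow> height B v = 0)"

definition parent_of :: "'a::euclidean_space set \<Rightarrow> 'a set \<Rightarrow> 'a \<Rightarrow> 'a \<Rightarrow> bool" where
  "parent_of P B w v \<longleftrightarrow> adjacent_in P v w \<and> height B w > height B v"

definition root_of :: "'a::euclidean_space set \<Rightarrow> 'a set \<Rightarrow> 'a \<Rightarrow> bool" where
  "root_of P B r \<longleftrightarrow> vertex_of r P \<and> \<not> (\<exists>w. parent_of P B w r)"

end

theory Submission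
  imports Defs
begin


lemma height_formula:
  fixes P B :: "'a::euclidean_space set" and a :: 'a
  assumes fac: "B facet_of P" and sub: "P \<subseteq> {x. a \<bullet> x \<le> b}" and Beq: "B = P \<inter> {x. a \<bullet> x = b}"
  shows "\<exists>k>0. \<forall>x\<in>P. infdist x (affine hull B) = k * (b - a \<bullet> x)"
proof -
  have Bne: "B \<noteq> {}" and dimB: "aff_dim B = aff_dim P - 1" and BP: "B \<subseteq> P"
    using fac by (auto simp: facet_of_def face_of_imp_subset)
  have notin: "\<not> P \<subseteq> {x. a \<bullet> x = b}"
  proof
    assume "P \<subseteq> {x. a \<bullet> x = b}"
    then have "B = P" using Beq by auto
    then show False using dimB by simp
  qed
  define A where "A = affine hull P"
  have affA: "affine A" by (simp add: A_def)
  have PA: "P \<subseteq> A" by (simp add: A_def hull_subset)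
  obtain z where zB: "z \<in> B" using Bne by auto
  have zA: "z \<in> A" and zb: "a \<bullet> z = b" using zB BP PA Beq by auto
  define H where "H = affine hull B"
  have H1: "H \<subseteq> A \<inter> {x. a \<bullet> x = b}"
    unfolding H_def
    by (rule hull_minimal) (use Beq PA in \<open>auto intro: affine_Int affA affine_hyperplane\<close>)
  have AnotH: "\<not> A \<subseteq> {x. a \<bullet> x = b}" using notin PA by auto
  have "aff_dim (A \<inter> {x. a \<bullet> x = b}) = aff_dim A - 1"
    using aff_dim_affine_Int_hyperplane[OF affA, of a b] zA zb AnotH by auto
  also have "\<dots> = aff_dim H"
    by (simp add: A_def H_def dimB)
  finally have dimeq: "aff_dim H = aff_dim (A \<inter> {x. a \<bullet> x = b})" by simp
  have Heq: "H = A \<inter> {x. a \<bullet> x = b}"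
    by (rule affine_dim_equal) (use H1 dimeq Bne affA in \<open>auto simp: H_def intro: affine_Int affine_hyperplane\<close>)
  define S where "S = (+) (- z) ` A"
  have subS: "subspace S" unfolding S_def by (rule affine_diffs_subspace[OF affA zA])
  then have spanS: "span S = S" by (simp add: span_eq_iff)
  have memS: "v \<in> S \<longleftrightarrow> z + v \<in> A" for v
    unfolding S_def by (auto simp: image_iff) (metis add.commute diff_add_cancel uminus_add_conv_diff)
  obtain a' a'' where a': "a' \<in> span S" and a: "a = a' + a''"
                  and orth: "\<And>w. w \<in> span S \<Longrightarrow> orthogonal a'' w"
    using orthogonal_subspace_decomp_exists [of S "a"] by metis
  have a'S: "a' \<in> S" using a' spanS by simp
  have diffS: "x - y \<in> S" if "x \<in> A" "y \<in> A" for x y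
  proof -
    have h1: "x - z \<in> S" and h2: "y - z \<in> S" using that memS by auto
    have "(x - z) - (y - z) \<in> S" using subspace_diff[OF subS h1 h2] .
    moreover have "(x - z) - (y - z) = x - y" by simp
    ultimately show ?thesis by metis
  qed
  have a''0: "a'' \<bullet> (x - y) = 0" if "x \<in> A" "y \<in> A" for x y
    using orth[of "x - y"] diffS[OF that] spanS by (simp add: orthogonal_def)
  have adiff: "a \<bullet> (x - y) = a' \<bullet> (x - y)" if "x \<in> A" "y \<in> A" for x y
    using a''0[OF that] by (simp add: a inner_add_left)
  have aa': "a \<bullet> a' = a' \<bullet> a'"
    using orth[OF a'] by (simp add: a inner_add_left inner_add_right orthogonal_def inner_commute)
  have a'ne: "a' \<noteq> 0"
  proof
    assume "a' = 0"
    then have "a \<bullet> x = b" if "x \<in> A" for x using adiff[OF that zA] zb by (simp add: inner_diff_right)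
    then show False using AnotH by auto
  qed
  have moveA: "x + t *\<^sub>R a' \<in> A" if "x \<in> A" for x t
  proof -
    have "x - z \<in> S" using that memS by simp
    then have "(x - z) + t *\<^sub>R a' \<in> S" using subS a'S by (simp add: subspace_add subspace_scale)
    then have "z + ((x - z) + t *\<^sub>R a') \<in> A" using memS by blast
    then show ?thesis by simp
  qed
  have na: "norm a' > 0" using a'ne by simp
  have dist_eq: "infdist x H = \<bar>b - a \<bullet> x\<bar> / norm a'" if xA: "x \<in> A" for x
  proof (rule antisym)
    define t where "t = (b - a \<bullet> x) / (a' \<bullet> a')"
    have pos: "a' \<bullet> a' > 0" using a'ne by simp
    define y where "y = x + t *\<^sub>R a'"
    have yA: "y \<in> A" unfolding y_def by (rule moveA[OF xA])
    have "a \<bullet> y = a \<bullet> x + t * (a' \<bullet> a')" by (simp add: y_def inner_add_right aa')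
    also have "\<dots> = b" using pos by (simp add: t_def)
    finally have "y \<in> H" using yA Heq by auto
    then have "infdist x H \<le> dist x y" by (rule infdist_le)
    also have "dist x y = \<bar>t\<bar> * norm a'" by (simp add: y_def dist_norm)
    also have "\<dots> = \<bar>b - a \<bullet> x\<bar> / norm a'"
      using pos na by (simp add: t_def abs_div power2_norm_eq_inner[symmetric] power2_eq_square field_simps)
    finally show "infdist x H \<le> \<bar>b - a \<bullet> x\<bar> / norm a'" .
  next
    have Hne: "H \<noteq> {}" using Bne by (simp add: H_def)
    show "\<bar>b - a \<bullet> x\<bar> / norm a' \<le> infdist x H"
      unfolding infdist_notempty[OF Hne]
    proof (rule cINF_greatest[OF Hne])
      fix y assume "y \<in> H"
      then have yA: "y \<in> A" and yb: "a \<bullet> y = b" using Heq by auto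
      have "\<bar>b - a \<bullet> x\<bar> = \<bar>a' \<bullet> (y - x)\<bar>" using adiff[OF yA xA] yb by (simp add: inner_diff_right)
      also have "\<dots> \<le> norm a' * norm (y - x)" by (rule Cauchy_Schwarz_ineq2)
      finally show "\<bar>b - a \<bullet> x\<bar> / norm a' \<le> dist x y"
        using na by (simp add: divide_le_eq dist_norm norm_minus_commute mult.commute)
    qed
  qed
  show ?thesis
  proof (intro exI[of _ "1 / norm a'"] conjI ballI)
    show "0 < 1 / norm a'" using na by simp
    fix x assume "x \<in> P"
    then have "b - a \<bullet> x \<ge> 0" "x \<in> A" using sub PA by auto
    then show "infdist x (affine hull B) = 1 / norm a' * (b - a \<bullet> x)"
      using dist_eq H_def by simp
  qed
qed



lemma no_three_extreme_collinear:
  fixes u v w :: "'a::euclidean_space"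
  assumes "collinear F" "u \<in> F" "v \<in> F" "w \<in> F" "u \<noteq> v" "v \<noteq> w" "u \<noteq> w"
    and "u extreme_point_of P" "v extreme_point_of P" "w extreme_point_of P"
  shows False
proof -
  have "collinear {u,v,w}" using assms by (auto intro: collinear_subset)
  then have "between (v,w) u \<or> between (w,u) v \<or> between (u,v) w"
    by (simp add: collinear_between_cases)
  then show False using assms
    by (auto simp: between_mem_segment extreme_point_of_def open_segment_def)
qed

lemma core:
  fixes P B :: "'a::euclidean_space set"
  assumes poly: "polytope P"
    and tree: "\<forall>F. F face_of P \<and> (F \<inter> B = {} \<or> (\<exists>x. F \<inter> B = {x})) \<longrightarrow> aff_dim F \<le> 1"
    and Bzero: "\<forall>y\<in>B. a \<bullet> y = b"
    and nonneg: "\<forall>y\<in>P. a \<bullet> y \<le> b"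
    and v: "v extreme_point_of P"
    and expose: "\<forall>z\<in>P. z \<noteq> v \<longrightarrow> p \<bullet> z < p \<bullet> v"
    and x: "x extreme_point_of P" "x \<noteq> v" "a \<bullet> v - a \<bullet> x > 0"
    and top: "\<forall>z. z extreme_point_of P \<and> z \<noteq> v \<longrightarrow>
               (a \<bullet> v - a \<bullet> z) * (p \<bullet> v - p \<bullet> x) \<le> (a \<bullet> v - a \<bullet> x) * (p \<bullet> v - p \<bullet> z)"
  shows "(\<forall>y. y extreme_point_of P \<and> y \<noteq> v \<and>
               (a \<bullet> v - a \<bullet> y) * (p \<bullet> v - p \<bullet> x) = (a \<bullet> v - a \<bullet> x) * (p \<bullet> v - p \<bullet> y) \<longrightarrow> y = x)
         \<and> closed_segment v x edge_of P"
proof -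
  have vP: "v \<in> P" and xP: "x \<in> P" using v x by (auto simp: extreme_point_of_def)
  define Dx where "Dx = p \<bullet> v - p \<bullet> x"
  define Ax where "Ax = a \<bullet> v - a \<bullet> x"
  have Dx: "Dx > 0" using expose xP x(2) by (auto simp: Dx_def)
  have Ax: "Ax > 0" using x(3) by (simp add: Ax_def)
  define c where "c = Ax / Dx"
  have c: "c > 0" using Ax Dx by (simp add: c_def)
  define q where "q = c *\<^sub>R p - a"
  have qval: "q \<bullet> z = c * (p \<bullet> z) - a \<bullet> z" for z by (simp add: q_def inner_diff_left)
  have cmp: "q \<bullet> z \<le> q \<bullet> v \<longleftrightarrow> (a \<bullet> v - a \<bullet> z) * Dx \<le> Ax * (p \<bullet> v - p \<bullet> z)" for z
  proof -
    have "q \<bullet> z \<le> q \<bullet> v \<longleftrightarrow> (a \<bullet> v - a \<bullet> z) \<le> c * (p \<bullet> v - p \<bullet> z)"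
      by (simp add: qval algebra_simps)
    also have "\<dots> \<longleftrightarrow> (a \<bullet> v - a \<bullet> z) * Dx \<le> Ax * (p \<bullet> v - p \<bullet> z)"
      using Dx by (simp add: c_def field_simps)
    finally show ?thesis .
  qed
  have eqv: "q \<bullet> z = q \<bullet> v \<longleftrightarrow> (a \<bullet> v - a \<bullet> z) * Dx = Ax * (p \<bullet> v - p \<bullet> z)" for z
  proof -
    have "q \<bullet> z = q \<bullet> v \<longleftrightarrow> (a \<bullet> v - a \<bullet> z) = c * (p \<bullet> v - p \<bullet> z)"
      by (auto simp: qval algebra_simps)
    also have "\<dots> \<longleftrightarrow> (a \<bullet> v - a \<bullet> z) * Dx = Ax * (p \<bullet> v - p \<bullet> z)"
      using Dx by (simp add: c_def field_simps)
    finally show ?thesis .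
  qed
  have cvx: "convex P" and cpt: "compact P" using poly by (auto simp: polytope_imp_convex polytope_imp_compact)
  have KM: "P = convex hull {z. z extreme_point_of P}" using Krein_Milman_Minkowski[OF cpt cvx] .
  have Vle: "q \<bullet> z \<le> q \<bullet> v" if "z extreme_point_of P" for z
  proof (cases "z = v")
    case False then show ?thesis using top that by (simp add: cmp Dx_def Ax_def)
  qed simp
  have Ple: "q \<bullet> z \<le> q \<bullet> v" if "z \<in> P" for z
  proof -
    have "convex hull {z. z extreme_point_of P} \<subseteq> {z. q \<bullet> z \<le> q \<bullet> v}"
      by (rule hull_minimal) (use Vle in \<open>auto intro: convex_halfspace_le\<close>)
    then show ?thesis using that KM by auto
  qed
  define F where "F = P \<inter> {z. q \<bullet> z = q \<bullet> v}"
  have faceF: "F face_of P" unfolding F_def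
    by (rule face_of_Int_supporting_hyperplane_le[OF cvx]) (use Ple in auto)
  have low: "a \<bullet> z < b" if "z \<in> F" "z \<noteq> v" for z
  proof -
    have zP: "z \<in> P" and eq: "(a \<bullet> v - a \<bullet> z) * Dx = Ax * (p \<bullet> v - p \<bullet> z)"
      using that eqv by (auto simp: F_def)
    have "p \<bullet> v - p \<bullet> z > 0" using expose zP that(2) by auto
    then have "(a \<bullet> v - a \<bullet> z) * Dx > 0" using eq Ax by simp
    then have "a \<bullet> v - a \<bullet> z > 0" using Dx by (simp add: zero_less_mult_iff)
    then show ?thesis using nonneg vP by auto
  qed
  have FB: "F \<inter> B = {} \<or> (\<exists>y. F \<inter> B = {y})"
  proof -
    have "F \<inter> B \<subseteq> {v}" using low Bzero by fastforce
    then show ?thesis by (metis subset_singleton_iff)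
  qed
  have "aff_dim F \<le> 1" using tree faceF FB by blast
  then have colF: "collinear F" by (simp add: collinear_aff_dim)
  have vF: "v \<in> F" using vP by (simp add: F_def)
  have xF: "x \<in> F" using xP eqv by (simp add: F_def Dx_def Ax_def)
  have uniq: "y = x" if "y extreme_point_of P" "y \<noteq> v"
     "(a \<bullet> v - a \<bullet> y) * (p \<bullet> v - p \<bullet> x) = (a \<bullet> v - a \<bullet> x) * (p \<bullet> v - p \<bullet> y)" for y
  proof (rule ccontr)
    assume "y \<noteq> x"
    have yF: "y \<in> F" using that eqv by (auto simp: F_def Dx_def Ax_def extreme_point_of_def)
    show False
      by (rule no_three_extreme_collinear[OF colF vF xF yF]) (use that x v \<open>y \<noteq> x\<close> in auto)
  qed
  have polyF: "polytope F" using face_of_polytope_polytope[OF poly faceF] .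
  have KMF: "F = convex hull {z. z extreme_point_of F}"
    using Krein_Milman_Minkowski polyF polytope_imp_compact polytope_imp_convex by blast
  have extF: "{z. z extreme_point_of F} \<subseteq> {v, x}"
  proof
    fix z assume "z \<in> {z. z extreme_point_of F}"
    then have zP: "z extreme_point_of P" and zF: "z \<in> F"
      using extreme_point_of_face[OF faceF] by auto
    show "z \<in> {v, x}"
    proof (cases "z = v")
      case False
      have "(a \<bullet> v - a \<bullet> z) * Dx = Ax * (p \<bullet> v - p \<bullet> z)" using zF eqv by (auto simp: F_def)
      then have "z = x" using uniq[OF zP False] by (simp add: Dx_def Ax_def)
      then show ?thesis by simp
    qed simp
  qed
  have "F \<subseteq> closed_segment v x"
    using KMF extF hull_mono by (metis segment_convex_hull)
  moreover have "closed_segment v x \<subseteq> F"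
    using face_of_imp_convex[OF faceF] vF xF by (simp add: closed_segment_subset)
  ultimately have Fseg: "F = closed_segment v x" by auto
  have "aff_dim (closed_segment v x) = 1"
    using x(2) by (simp add: segment_convex_hull aff_dim_convex_hull)
  then have "closed_segment v x edge_of P" using faceF Fseg by (simp add: edge_of_def)
  then show ?thesis using uniq by blast
qed



lemma pick_top:
  fixes A D :: "'b \<Rightarrow> real"
  assumes "finite X" "X \<noteq> {}" "\<forall>y\<in>X. D y > 0"
  shows "\<exists>x\<in>X. \<forall>y\<in>X. A y * D x \<le> A x * D y"
proof -
  define M where "M = Max ((\<lambda>y. A y / D y) ` X)"
  have "M \<in> (\<lambda>y. A y / D y) ` X" unfolding M_def using assms by (intro Max_in) auto
  then obtain x where x: "x \<in> X" "M = A x / D x" by auto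
  have "A y * D x \<le> A x * D y" if "y \<in> X" for y
  proof -
    have "A y / D y \<le> M" unfolding M_def using assms that by (intro Max_ge) auto
    then have "A y / D y \<le> A x / D x" using x by simp
    then show ?thesis using assms that x by (simp add: divide_simps mult.commute)
  qed
  then show ?thesis using x by blast
qed

lemma exists_exposing:
  fixes P :: "'a::euclidean_space set"
  assumes "polytope P" "v extreme_point_of P"
  shows "\<exists>p. \<forall>z\<in>P. z \<noteq> v \<longrightarrow> p \<bullet> z < p \<bullet> v"
proof -
  have "{v} face_of P" using assms by (simp add: face_of_singleton)
  then have "{v} exposed_face_of P"
    using exposed_face_of_polyhedron polytope_imp_polyhedron assms by blast
  then obtain p d where "P \<subseteq> {x. p \<bullet> x \<le> d}" "{v} = P \<inter> {x. p \<bullet> x = d}"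
    by (auto simp: exposed_face_of_def)
  then have "\<forall>z\<in>P. z \<noteq> v \<longrightarrow> p \<bullet> z < p \<bullet> v"
    by (metis (mono_tags, lifting) Int_iff insertI1 less_eq_real_def mem_Collect_eq singletonD subsetD)
  then show ?thesis by blast
qed

lemma edge_functional:
  fixes P :: "'a::euclidean_space set"
  assumes poly: "polytope P" and v: "v extreme_point_of P" and w: "w extreme_point_of P"
    and edge: "closed_segment v w edge_of P" and up: "a \<bullet> v - a \<bullet> w > 0"
  shows "\<exists>p. (\<forall>z\<in>P. z \<noteq> v \<longrightarrow> p \<bullet> z < p \<bullet> v) \<and>
             (\<forall>z. z extreme_point_of P \<and> z \<noteq> v \<longrightarrow>
               (a \<bullet> v - a \<bullet> z) * (p \<bullet> v - p \<bullet> w) \<le> (a \<bullet> v - a \<bullet> w) * (p \<bullet> v - p \<bullet> z))"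
proof -
  have vP: "v \<in> P" and wP: "w \<in> P" using v w by (auto simp: extreme_point_of_def)
  have vw: "v \<noteq> w" using edge by (auto simp: edge_of_def)
  obtain p0 where p0: "\<forall>z\<in>P. z \<noteq> v \<longrightarrow> p0 \<bullet> z < p0 \<bullet> v"
    using exists_exposing[OF poly v] by blast
  have "closed_segment v w exposed_face_of P"
    using exposed_face_of_polyhedron polytope_imp_polyhedron poly edge by (auto simp: edge_of_def)
  then obtain q d where qle: "P \<subseteq> {x. q \<bullet> x \<le> d}" and qeq: "closed_segment v w = P \<inter> {x. q \<bullet> x = d}"
    by (auto simp: exposed_face_of_def)
  have qv: "q \<bullet> v = d" and qw: "q \<bullet> w = d" using qeq by auto
  define V where "V = {z. z extreme_point_of P}"
  have finV: "finite V" unfolding V_def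
    using finite_polyhedron_extreme_points polytope_imp_polyhedron poly by blast
  define W where "W = V - {v, w}"
  have finW: "finite W" using finV by (simp add: W_def)
  define \<delta> where "\<delta> z = q \<bullet> v - q \<bullet> z" for z
  have \<delta>pos: "\<delta> z > 0" if "z \<in> W" for z
  proof -
    have zP: "z extreme_point_of P" "z \<noteq> v" "z \<noteq> w" using that by (auto simp: W_def V_def)
    have "z \<notin> closed_segment v w"
    proof
      assume "z \<in> closed_segment v w"
      then have "z \<in> open_segment v w" using zP by (simp add: open_segment_def)
      then show False using zP vP wP by (auto simp: extreme_point_of_def)
    qed
    moreover have "z \<in> P" using zP by (simp add: extreme_point_of_def)
    ultimately have "q \<bullet> z < d" using qle qeq by force
    then show ?thesis using qv by (simp add: \<delta>_def)
  qed
  have \<delta>nn: "\<delta> z \<ge> 0" if "z \<in> P" for z using qle that qv by (auto simp: \<delta>_def)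
  define m where "m = Min (insert 1 (\<delta> ` W))"
  have m: "m > 0" unfolding m_def using finW \<delta>pos by (subst Min_gr_iff) auto
  have mle: "m \<le> \<delta> z" if "z \<in> W" for z unfolding m_def using finW that by (intro Min_le) auto
  define K where "K = Max (insert 0 ((\<lambda>z. \<bar>a \<bullet> v - a \<bullet> z\<bar>) ` V)) + 1"
  have Kge: "\<bar>a \<bullet> v - a \<bullet> z\<bar> \<le> K" if "z \<in> V" for z
  proof -
    have "\<bar>a \<bullet> v - a \<bullet> z\<bar> \<le> Max (insert 0 ((\<lambda>z. \<bar>a \<bullet> v - a \<bullet> z\<bar>) ` V))"
      using finV that by (intro Max_ge) auto
    then show ?thesis by (simp add: K_def)
  qed
  have K: "K > 0"
  proof -
    have "0 \<le> Max (insert 0 ((\<lambda>z. \<bar>a \<bullet> v - a \<bullet> z\<bar>) ` V))" using finV by (intro Max_ge) auto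
    then show ?thesis by (simp add: K_def)
  qed
  define e where "e = p0 \<bullet> v - p0 \<bullet> w"
  have e: "e > 0" using p0 wP vw by (auto simp: e_def)
  define Aw where "Aw = a \<bullet> v - a \<bullet> w"
  have Aw: "Aw > 0" using up by (simp add: Aw_def)
  define \<epsilon> where "\<epsilon> = Aw * m / (K * e)"
  have \<epsilon>: "\<epsilon> > 0" using Aw m K e by (simp add: \<epsilon>_def)
  have Ke: "K * \<epsilon> * e = Aw * m" using K e by (simp add: \<epsilon>_def)
  define p where "p = q + \<epsilon> *\<^sub>R p0"
  have Dp: "p \<bullet> v - p \<bullet> z = \<delta> z + \<epsilon> * (p0 \<bullet> v - p0 \<bullet> z)" for z
    by (simp add: p_def \<delta>_def inner_add_left algebra_simps)
  have exp: "\<forall>z\<in>P. z \<noteq> v \<longrightarrow> p \<bullet> z < p \<bullet> v"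
  proof (intro ballI impI)
    fix z assume "z \<in> P" "z \<noteq> v"
    then have "\<delta> z \<ge> 0" "p0 \<bullet> v - p0 \<bullet> z > 0" using \<delta>nn p0 by auto
    then have "\<delta> z + \<epsilon> * (p0 \<bullet> v - p0 \<bullet> z) > 0" using \<epsilon> by (simp add: add_nonneg_pos)
    then show "p \<bullet> z < p \<bullet> v" using Dp[of z] by simp
  qed
  have Dw: "p \<bullet> v - p \<bullet> w = \<epsilon> * e" using Dp[of w] qv qw by (simp add: \<delta>_def e_def)
  have top: "(a \<bullet> v - a \<bullet> z) * (p \<bullet> v - p \<bullet> w) \<le> (a \<bullet> v - a \<bullet> w) * (p \<bullet> v - p \<bullet> z)"
    if "z extreme_point_of P" "z \<noteq> v" for z
  proof (cases "z = w")
    case True then show ?thesis by simp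
  next
    case False
    have zW: "z \<in> W" and zV: "z \<in> V" using that False by (auto simp: W_def V_def)
    have zP: "z \<in> P" using that by (simp add: extreme_point_of_def)
    have ez: "p0 \<bullet> v - p0 \<bullet> z > 0" using p0 zP that by auto
    have "(a \<bullet> v - a \<bullet> z) * (\<epsilon> * e) \<le> \<bar>a \<bullet> v - a \<bullet> z\<bar> * (\<epsilon> * e)"
      using \<epsilon> e by (intro mult_right_mono) auto
    also have "\<dots> \<le> K * (\<epsilon> * e)" using Kge[OF zV] \<epsilon> e by (intro mult_right_mono) auto
    also have "\<dots> = Aw * m" using Ke by (simp add: mult.assoc)
    also have "\<dots> \<le> Aw * \<delta> z" using Aw mle[OF zW] by simp
    also have "\<dots> \<le> Aw * (\<delta> z + \<epsilon> * (p0 \<bullet> v - p0 \<bullet> z))"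
      using Aw \<epsilon> ez by (intro mult_left_mono) auto
    finally show ?thesis using Dw Dp[of z] by (simp add: Aw_def)
  qed
  show ?thesis using exp top by blast
qed



lemma connect_tops:
  fixes P B :: "'a::euclidean_space set"
  assumes poly: "polytope P"
    and tree: "\<forall>F. F face_of P \<and> (F \<inter> B = {} \<or> (\<exists>x. F \<inter> B = {x})) \<longrightarrow> aff_dim F \<le> 1"
    and Bzero: "\<forall>y\<in>B. a \<bullet> y = b"
    and nonneg: "\<forall>y\<in>P. a \<bullet> y \<le> b"
    and v: "v extreme_point_of P"
    and e1: "\<forall>z\<in>P. z \<noteq> v \<longrightarrow> p1 \<bullet> z < p1 \<bullet> v"
    and e2: "\<forall>z\<in>P. z \<noteq> v \<longrightarrow> p2 \<bullet> z < p2 \<bullet> v"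
    and w1: "w1 extreme_point_of P" "w1 \<noteq> v" "a \<bullet> v - a \<bullet> w1 > 0"
    and w2: "w2 extreme_point_of P" "w2 \<noteq> v" "a \<bullet> v - a \<bullet> w2 > 0"
    and top1: "\<forall>z. z extreme_point_of P \<and> z \<noteq> v \<longrightarrow>
               (a \<bullet> v - a \<bullet> z) * (p1 \<bullet> v - p1 \<bullet> w1) \<le> (a \<bullet> v - a \<bullet> w1) * (p1 \<bullet> v - p1 \<bullet> z)"
    and top2: "\<forall>z. z extreme_point_of P \<and> z \<noteq> v \<longrightarrow>
               (a \<bullet> v - a \<bullet> z) * (p2 \<bullet> v - p2 \<bullet> w2) \<le> (a \<bullet> v - a \<bullet> w2) * (p2 \<bullet> v - p2 \<bullet> z)"
  shows "w1 = w2"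
proof (rule ccontr)
  assume ne: "w1 \<noteq> w2"
  define pt where "pt t = (1 - t) *\<^sub>R p1 + t *\<^sub>R p2" for t :: real
  define D where "D t z = pt t \<bullet> v - pt t \<bullet> z" for t z
  define Av where "Av z = a \<bullet> v - a \<bullet> z" for z
  define V' where "V' = {z. z extreme_point_of P} - {v}"
  define X where "X = {x \<in> V'. Av x > 0}"
  have finV': "finite V'" unfolding V'_def
    using finite_polyhedron_extreme_points polytope_imp_polyhedron poly by blast
  have finX: "finite X" using finV' by (simp add: X_def)
  have w1X: "w1 \<in> X" and w2X: "w2 \<in> X" using w1 w2 by (auto simp: X_def V'_def Av_def)
  have pt0: "pt 0 = p1" and pt1: "pt 1 = p2" by (simp_all add: pt_def)
  have expt: "\<forall>z\<in>P. z \<noteq> v \<longrightarrow> pt t \<bullet> z < pt t \<bullet> v" if "t \<in> {0..1}" for t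
  proof (intro ballI impI)
    fix z assume "z \<in> P" "z \<noteq> v"
    then have h1: "p1 \<bullet> z < p1 \<bullet> v" and h2: "p2 \<bullet> z < p2 \<bullet> v" using e1 e2 by auto
    have t: "0 \<le> t" "t \<le> 1" using that by auto
    have "pt t \<bullet> v - pt t \<bullet> z = (1 - t) * (p1 \<bullet> v - p1 \<bullet> z) + t * (p2 \<bullet> v - p2 \<bullet> z)"
      by (simp add: pt_def inner_add_left algebra_simps)
    also have "\<dots> > 0"
    proof (cases "t = 0")
      case True then show ?thesis using h1 by simp
    next
      case False
      then have "t > 0" using t by simp
      then have "t * (p2 \<bullet> v - p2 \<bullet> z) > 0" using h2 by simp
      moreover have "(1 - t) * (p1 \<bullet> v - p1 \<bullet> z) \<ge> 0" using h1 t by simp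
      ultimately show ?thesis by simp
    qed
    finally show "pt t \<bullet> z < pt t \<bullet> v" by simp
  qed
  have Dpos: "D t z > 0" if "t \<in> {0..1}" "z \<in> V'" for t z
    using expt[OF that(1)] that(2) by (auto simp: D_def V'_def extreme_point_of_def)
  define S where "S x = (\<Inter>z\<in>V'. {t. Av z * D t x \<le> Av x * D t z})" for x
  have closedS: "closed (S x)" for x
    unfolding S_def D_def pt_def
    by (intro closed_INT ballI closed_Collect_le continuous_intros)
  define E1 where "E1 = S w1"
  define E2 where "E2 = (\<Union>x\<in>X - {w1}. S x)"
  have cE1: "closed E1" using closedS by (simp add: E1_def)
  have cE2: "closed E2" unfolding E2_def using finX closedS by (intro closed_UN) auto
  have tops_eq: "x = y" if "t \<in> {0..1}" "x \<in> X" "y \<in> X" "t \<in> S x" "t \<in> S y" for t x y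
  proof -
    have xV: "x extreme_point_of P" "x \<noteq> v" "Av x > 0" and yV: "y extreme_point_of P" "y \<noteq> v" "Av y > 0"
      using that by (auto simp: X_def V'_def)
    have topx: "\<forall>z. z extreme_point_of P \<and> z \<noteq> v \<longrightarrow>
               (a \<bullet> v - a \<bullet> z) * (pt t \<bullet> v - pt t \<bullet> x) \<le> (a \<bullet> v - a \<bullet> x) * (pt t \<bullet> v - pt t \<bullet> z)"
      using that(4) by (auto simp: S_def V'_def D_def Av_def)
    have c: "(\<forall>y. y extreme_point_of P \<and> y \<noteq> v \<and>
               (a \<bullet> v - a \<bullet> y) * (pt t \<bullet> v - pt t \<bullet> x) = (a \<bullet> v - a \<bullet> x) * (pt t \<bullet> v - pt t \<bullet> y) \<longrightarrow> y = x)"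
      using core[OF poly tree Bzero nonneg v expt[OF that(1)] xV[unfolded Av_def] topx] by blast
    have "x \<in> V'" "y \<in> V'" using xV yV by (auto simp: V'_def)
    then have i1: "Av y * D t x \<le> Av x * D t y" and i2: "Av x * D t y \<le> Av y * D t x"
      using that(4,5) by (auto simp: S_def)
    then have "Av y * D t x = Av x * D t y" by linarith
    then show ?thesis using c yV by (auto simp: Av_def D_def)
  qed
  have cover: "{0..1} \<subseteq> E1 \<union> E2"
  proof
    fix t :: real assume t: "t \<in> {0..1}"
    have "\<forall>y\<in>X. D t y > 0" using Dpos[OF t] unfolding X_def by blast
    then obtain x where x: "x \<in> X" and xm: "\<forall>y\<in>X. Av y * D t x \<le> Av x * D t y"
      using pick_top[OF finX _, of "D t" Av] w1X by blast
    have "t \<in> S x"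
      unfolding S_def
    proof (intro InterI, clarsimp)
      fix z assume zV: "z \<in> V'"
      show "Av z * D t x \<le> Av x * D t z"
      proof (cases "z \<in> X")
        case True then show ?thesis using xm by blast
      next
        case False
        then have "Av z \<le> 0" using zV by (auto simp: X_def)
        moreover have "D t x > 0" "D t z > 0" "Av x > 0" using Dpos[OF t] zV x by (auto simp: X_def)
        ultimately have "Av z * D t x \<le> 0" "0 \<le> Av x * D t z"
          by (simp_all add: mult_nonpos_nonneg)
        then show ?thesis by linarith
      qed
    qed
    then show "t \<in> E1 \<union> E2" using x by (cases "x = w1") (auto simp: E1_def E2_def)
  qed
  have disj: "E1 \<inter> E2 \<inter> {0..1} = {}"
    using tops_eq w1X by (auto simp: E1_def E2_def)
  have "0 \<in> E1"
    using top1 by (auto simp: E1_def S_def D_def Av_def pt0 V'_def)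
  moreover have "1 \<in> E2"
  proof -
    have "1 \<in> S w2" using top2 by (auto simp: S_def D_def Av_def pt1 V'_def)
    then show ?thesis using w2X ne by (auto simp: E2_def)
  qed
  moreover have "0 \<in> {0..1::real}" "1 \<in> {0..1::real}" by auto
  ultimately have "E1 \<inter> {0..1} \<noteq> {}" "E2 \<inter> {0..1} \<noteq> {}" by blast+
  then have "\<exists>A B. closed A \<and> closed B \<and> {0..1::real} \<subseteq> A \<union> B \<and> A \<inter> B \<inter> {0..1} = {} \<and> A \<inter> {0..1} \<noteq> {} \<and> B \<inter> {0..1} \<noteq> {}"
    using cE1 cE2 cover disj by blast
  then show False
    using connected_Icc[of "0::real" 1] unfolding connected_closed by blast
qed



theorem mainTheorem1:
  fixes P B :: "'a::euclidean_space set"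
  assumes "general_position_treetope P B"
  shows "(\<forall>v. vertex_of v P \<longrightarrow> (\<forall>w1 w2. parent_of P B w1 v \<and> parent_of P B w2 v \<longrightarrow> w1 = w2))
         \<and> (\<exists>!r. root_of P B r)"
proof -
  have poly: "polytope P" and fac: "B facet_of P"
    and tree: "\<forall>F. F face_of P \<and> (F \<inter> B = {} \<or> (\<exists>x. F \<inter> B = {x})) \<longrightarrow> aff_dim F \<le> 1"
    and gp: "\<forall>v w. vertex_of v P \<and> vertex_of w P \<and> v \<noteq> w \<and> height B v = height B w \<longrightarrow> height B v = 0"
    using assms by (auto simp: general_position_treetope_def treetope_def)
  have "B exposed_face_of P"
    using exposed_face_of_polyhedron polytope_imp_polyhedron poly fac by (auto simp: facet_of_def)
  then obtain a b where sub: "P \<subseteq> {x. a \<bullet> x \<le> b}" and Beq: "B = P \<inter> {x. a \<bullet> x = b}"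
    by (auto simp: exposed_face_of_def)
  obtain k where k: "k > 0" and hk: "\<forall>x\<in>P. height B x = k * (b - a \<bullet> x)"
    using height_formula[OF fac sub Beq] by (auto simp: height_def)
  have Bzero: "\<forall>y\<in>B. a \<bullet> y = b" using Beq by auto
  have nonneg: "\<forall>y\<in>P. a \<bullet> y \<le> b" using sub by auto
  have vx: "vertex_of v P \<longleftrightarrow> v extreme_point_of P" for v by (simp add: vertex_of_def face_of_singleton)
  have inP: "v \<in> P" if "v extreme_point_of P" for v using that by (simp add: extreme_point_of_def)
  have hcmp: "height B y > height B x \<longleftrightarrow> a \<bullet> x - a \<bullet> y > 0" if "x \<in> P" "y \<in> P" for x y
    using hk that k by auto
  have par: "parent_of P B w v \<longleftrightarrow> v extreme_point_of P \<and> w extreme_point_of P \<and> v \<noteq> w \<and>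
      closed_segment v w edge_of P \<and> a \<bullet> v - a \<bullet> w > 0" for w v
    unfolding parent_of_def adjacent_in_def vx using hcmp inP by blast
  have part1: "\<forall>v. vertex_of v P \<longrightarrow> (\<forall>w1 w2. parent_of P B w1 v \<and> parent_of P B w2 v \<longrightarrow> w1 = w2)"
  proof (intro allI impI)
    fix v w1 w2 assume "vertex_of v P" "parent_of P B w1 v \<and> parent_of P B w2 v"
    then have v: "v extreme_point_of P" and
      w1: "w1 extreme_point_of P" "v \<noteq> w1" "closed_segment v w1 edge_of P" "a \<bullet> v - a \<bullet> w1 > 0" and
      w2: "w2 extreme_point_of P" "v \<noteq> w2" "closed_segment v w2 edge_of P" "a \<bullet> v - a \<bullet> w2 > 0"
      using par by auto
    obtain p1 where p1: "\<forall>z\<in>P. z \<noteq> v \<longrightarrow> p1 \<bullet> z < p1 \<bullet> v"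
      "\<forall>z. z extreme_point_of P \<and> z \<noteq> v \<longrightarrow>
               (a \<bullet> v - a \<bullet> z) * (p1 \<bullet> v - p1 \<bullet> w1) \<le> (a \<bullet> v - a \<bullet> w1) * (p1 \<bullet> v - p1 \<bullet> z)"
      using edge_functional[OF poly v w1(1) w1(3) w1(4)] by blast
    obtain p2 where p2: "\<forall>z\<in>P. z \<noteq> v \<longrightarrow> p2 \<bullet> z < p2 \<bullet> v"
      "\<forall>z. z extreme_point_of P \<and> z \<noteq> v \<longrightarrow>
               (a \<bullet> v - a \<bullet> z) * (p2 \<bullet> v - p2 \<bullet> w2) \<le> (a \<bullet> v - a \<bullet> w2) * (p2 \<bullet> v - p2 \<bullet> z)"
      using edge_functional[OF poly v w2(1) w2(3) w2(4)] by blast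
    show "w1 = w2"
      by (rule connect_tops[OF poly tree Bzero nonneg v p1(1) p2(1) _ _ _ _ _ _ p1(2) p2(2)])
         (use w1 w2 in auto)
  qed
  define V where "V = {z. z extreme_point_of P}"
  have finV: "finite V" unfolding V_def
    using finite_polyhedron_extreme_points polytope_imp_polyhedron poly by blast
  have KM: "P = convex hull V" unfolding V_def
    using Krein_Milman_Minkowski poly polytope_imp_compact polytope_imp_convex by blast
  have Pne: "P \<noteq> {}" using fac by (auto simp: facet_of_def dest: face_of_imp_subset)
  have Vne: "V \<noteq> {}" using KM Pne by auto
  define m where "m = Min ((\<lambda>z. a \<bullet> z) ` V)"
  have "m \<in> (\<lambda>z. a \<bullet> z) ` V" unfolding m_def using finV Vne by (intro Min_in) auto
  then obtain r0 where r0V: "r0 \<in> V" and r0m: "a \<bullet> r0 = m" by auto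
  have mle: "m \<le> a \<bullet> z" if "z \<in> V" for z unfolding m_def using finV that by (intro Min_le) auto
  have root0: "root_of P B r0"
    unfolding root_of_def vx using r0V r0m mle par by (force simp: V_def)
  have rootmin: "\<forall>z\<in>V. a \<bullet> r \<le> a \<bullet> z" if rt: "root_of P B r" for r
  proof (rule ccontr)
    assume "\<not> (\<forall>z\<in>V. a \<bullet> r \<le> a \<bullet> z)"
    then obtain z where zV: "z \<in> V" and zl: "a \<bullet> z < a \<bullet> r" by force
    have r: "r extreme_point_of P" using rt by (simp add: root_of_def vx)
    obtain p0 where p0: "\<forall>z\<in>P. z \<noteq> r \<longrightarrow> p0 \<bullet> z < p0 \<bullet> r" using exists_exposing[OF poly r] by blast
    define X where "X = {x \<in> V - {r}. a \<bullet> r - a \<bullet> x > 0}"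
    have finX: "finite X" using finV by (simp add: X_def)
    have zX: "z \<in> X" using zV zl by (auto simp: X_def)
    have Dpos: "\<forall>y\<in>X. p0 \<bullet> r - p0 \<bullet> y > 0" using p0 inP by (auto simp: X_def V_def)
    obtain x where xX: "x \<in> X" and xm: "\<forall>y\<in>X. (a \<bullet> r - a \<bullet> y) * (p0 \<bullet> r - p0 \<bullet> x) \<le> (a \<bullet> r - a \<bullet> x) * (p0 \<bullet> r - p0 \<bullet> y)"
      using pick_top[OF finX _ Dpos, of "\<lambda>y. a \<bullet> r - a \<bullet> y"] zX by blast
    have x: "x extreme_point_of P" "x \<noteq> r" "a \<bullet> r - a \<bullet> x > 0" using xX by (auto simp: X_def V_def)
    have top: "\<forall>y. y extreme_point_of P \<and> y \<noteq> r \<longrightarrow>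
               (a \<bullet> r - a \<bullet> y) * (p0 \<bullet> r - p0 \<bullet> x) \<le> (a \<bullet> r - a \<bullet> x) * (p0 \<bullet> r - p0 \<bullet> y)"
    proof (intro allI impI)
      fix y assume y: "y extreme_point_of P \<and> y \<noteq> r"
      show "(a \<bullet> r - a \<bullet> y) * (p0 \<bullet> r - p0 \<bullet> x) \<le> (a \<bullet> r - a \<bullet> x) * (p0 \<bullet> r - p0 \<bullet> y)"
      proof (cases "y \<in> X")
        case True then show ?thesis using xm by blast
      next
        case False
        then have "a \<bullet> r - a \<bullet> y \<le> 0" using y by (auto simp: X_def V_def)
        moreover have "p0 \<bullet> r - p0 \<bullet> x > 0" "p0 \<bullet> r - p0 \<bullet> y > 0"
          using Dpos xX p0 y inP by auto
        ultimately have "(a \<bullet> r - a \<bullet> y) * (p0 \<bullet> r - p0 \<bullet> x) \<le> 0" "0 \<le> (a \<bullet> r - a \<bullet> x) * (p0 \<bullet> r - p0 \<bullet> y)"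
          using x(3) by (simp_all add: mult_nonpos_nonneg)
        then show ?thesis by linarith
      qed
    qed
    have "closed_segment r x edge_of P"
      using core[OF poly tree Bzero nonneg r p0 x top] by blast
    then have "parent_of P B x r" using par r x by auto
    then show False using rt by (auto simp: root_of_def)
  qed
  have uniq: "r1 = r2" if "root_of P B r1" "root_of P B r2" for r1 r2
  proof (rule ccontr)
    assume ne: "r1 \<noteq> r2"
    have r1: "r1 \<in> V" and r2: "r2 \<in> V" using that by (auto simp: root_of_def vx V_def)
    have eq: "a \<bullet> r1 = a \<bullet> r2" using rootmin[OF that(1)] rootmin[OF that(2)] r1 r2 by force
    have "height B r1 = height B r2" using hk r1 r2 inP eq by (auto simp: V_def)
    then have "height B r1 = 0" using gp ne that by (auto simp: root_of_def)
    then have b1: "a \<bullet> r1 = b" using hk r1 inP k by (auto simp: V_def)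
    have "V \<subseteq> {x. a \<bullet> x = b}"
      using rootmin[OF that(1)] b1 nonneg inP by (force simp: V_def)
    then have "P \<subseteq> {x. a \<bullet> x = b}" using KM by (metis convex_hyperplane hull_minimal)
    then have "B = P" using Beq by auto
    then show False using fac by (simp add: facet_of_def)
  qed
  show ?thesis using part1 root0 uniq by blast
qed


end
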